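(* If $\mathbb{E}|f(X)|<+\infty$, then (with allocations computed by rule (a) or by rule (b)) $\hat c^k\to c$ almost surely as $k\to\infty$. If moreover $\mathbb{E}(f^2(X))<+\infty$, then almost surely $\hat\sigma_i^k\to\sigma_i$ for every $1\le i\le I$, and $\sum_{i=1}^I p_i\hat\sigma_i^k\to\sigma_*$ as $k\to\infty$.
   Context: Setting. $X$ is an $\mathbb{R}^d$-valued random variable, $f:\mathbb{R}^d\to\mathbb{R}$ is measurable, and $(A_i)_{1\le i\le I}$ is a measurable partition of $\mathbb{R}^d$ with $p_i=\mathbb{P}(X\in A_i)>0$ known for all $i$. $X_i$ denotes a random variable with the conditional law of $X$ given $X\in A_i$, and $c=\mathbb{E}f(X)=\sum_{i=1}^I p_i\mathbb{E}f(X_i)$. When $\mathbb{E}f^2(X)<\infty$: $\sigma_i^2=\mathrm{Var}(f(X_i))$, $\sigma_*=\sum_{i=1}^I p_i\sigma_i$. $(X_i^j)_{1\le i\le I,\,j\ge 1}$ are independent random variables, $X_i^j$ having the law of $X_i$. Adaptive algorithm. Fix deterministic integers $0=N^0<N^1<N^2<\cdots$ with $N^k-N^{k-1}\ge I$ for all $k\ge1$, and set $N_i^0=0$ for all $i$. For each step $k\ge1$: (1) If $k=1$ set $\hat\sigma_i^0=1$ for all $i$; if $k>1$ set $\hat\sigma_i^{k-1}\ge 0$ by $(\hat\sigma_i^{k-1})^2=\frac{1}{N_i^{k-1}}\sum_{j=1}^{N_i^{k-1}}f(X_i^j)^2-\big(\frac{1}{N_i^{k-1}}\sum_{j=1}^{N_i^{k-1}}f(X_i^j)\big)^2$.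 (2) Let $L_k=N^k-N^{k-1}-I$. If $\hat\sigma_i^{k-1}=0$ for all $i$, set $m_i^k=p_iL_k$. Otherwise compute $m_i^k\ge0$ by the chosen rule: Rule (a): $m_i^k=\frac{p_i\hat\sigma_i^{k-1}}{\sum_{j=1}^I p_j\hat\sigma_j^{k-1}}L_k$. Rule (b): set $m_i^k=0$ for every $i$ with $\hat\sigma_i^{k-1}=0$. Let $J$ be the set of the remaining indices, and for $i\in J$ put $n_i=N_i^{k-1}+1$, $\alpha_i=p_i\hat\sigma_i^{k-1}$. Enumerate $J$ as $(1),\dots,(|J|)$ so that $n_{(i)}/\alpha_{(i)}$ is nonincreasing in $i$. Let $i^*$ be the largest $i\in\{1,\dots,|J|-1\}$ such that $\frac{n_{(i)}}{\alpha_{(i)}}\ge\frac{L_k+\sum_{j=i+1}^{|J|}n_{(j)}}{\sum_{j=i+1}^{|J|}\alpha_{(j)}}$, and $i^*=0$ if there is no such $i$. Set $m_{(i)}^k=0$ for $i\le i^*$ and $m_{(i)}^k=\alpha_{(i)}\frac{L_k+\sum_{j=i^*+1}^{|J|}n_{(j)}}{\sum_{j=i^*+1}^{|J|}\alpha_{(j)}}-n_{(i)}$ for $i>i^*$. (3) (Systematic sampling) $\tilde m_i^k=\lfloor m_1^k+\dots+m_i^k\rfloor-\lfloor m_1^k+\dots+m_{i-1}^k\rfloor$ (second term $0$ for $i=1$), and $N_i^k=N_i^{k-1}+1+\tilde m_i^k$; thus $\sum_i N_i^k=N^k$ and at least one new drawing is made in each stratum. (4) The estimator after step $k$ is $\hat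 c^k=\sum_{i=1}^I\frac{p_i}{N_i^k}\sum_{j=1}^{N_i^k}f(X_i^j)$. *)

theory Defs
  imports "HOL-Probability.Probability"
begin

text \<open>Strata are indexed by 1..I, drawings by j = 1, 2, ...\<close>

datatype alloc_rule = RuleA | RuleB

definition emp_sd :: "(nat \<Rightarrow> real) \<Rightarrow> nat \<Rightarrow> real" where
  "emp_sd y n = sqrt ((\<Sum>j=1..n. (y j)^2) / real n - ((\<Sum>j=1..n. y j) / real n)^2)"

definition alloc_a :: "nat \<Rightarrow> (nat \<Rightarrow> real) \<Rightarrow> (nat \<Rightarrow> real) \<Rightarrow> real \<Rightarrow> (nat \<Rightarrow> real) \<Rightarrow> bool" where
  "alloc_a I p s L m \<longleftrightarrow>
     (\<forall>i\<in>{1..I}. m i = p i * s i / (\<Sum>j=1..I. p j * s j) * L)"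

text \<open>Rule (b), used when not all estimated deviations vanish. The enumeration sigma of J
  (ordering n/alpha nonincreasingly) is any admissible one.\<close>
definition alloc_b :: "nat \<Rightarrow> (nat \<Rightarrow> real) \<Rightarrow> (nat \<Rightarrow> real) \<Rightarrow> (nat \<Rightarrow> nat) \<Rightarrow> real
                        \<Rightarrow> (nat \<Rightarrow> real) \<Rightarrow> bool" where
  "alloc_b I p s n L m \<longleftrightarrow>
     (let J = {i\<in>{1..I}. s i \<noteq> 0}; K = card J;
          nn = (\<lambda>i. real (n i) + 1); \<alpha> = (\<lambda>i. p i * s i); r = (\<lambda>i. nn i / \<alpha> i)
      in \<exists>\<sigma>. bij_betw \<sigma> {1..K} J \<and>
            (\<forall>a\<in>{1..K}. \<forall>b\<in>{1..K}. a \<le> b \<longrightarrow> r (\<sigma> b) \<le> r (\<sigma> a)) \<and>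
            (let ist = Max (insert 0 {a\<in>{1..K-1}.
                          r (\<sigma> a) \<ge> (L + (\<Sum>b=a+1..K. nn (\<sigma> b))) / (\<Sum>b=a+1..K. \<alpha> (\<sigma> b))});
                 lam = (L + (\<Sum>b=ist+1..K. nn (\<sigma> b))) / (\<Sum>b=ist+1..K. \<alpha> (\<sigma> b))
             in (\<forall>i\<in>{1..I} - J. m i = 0) \<and>
                (\<forall>a\<in>{1..K}. m (\<sigma> a) = (if a \<le> ist then 0 else \<alpha> (\<sigma> a) * lam - nn (\<sigma> a)))))"

text \<open>Step (2): s = previous estimated deviations, n = previous allocations N_i^(k-1), L = L_k.\<close>
definition allocation :: "alloc_rule \<Rightarrow> nat \<Rightarrow> (nat \<Rightarrow> real) \<Rightarrow> (nat \<Rightarrow> real) \<Rightarrow> (nat \<Rightarrow> nat)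
                           \<Rightarrow> real \<Rightarrow> (nat \<Rightarrow> real) \<Rightarrow> bool" where
  "allocation rule I p s n L m \<longleftrightarrow>
     (if \<forall>i\<in>{1..I}. s i = 0 then (\<forall>i\<in>{1..I}. m i = p i * L)
      else (case rule of RuleA \<Rightarrow> alloc_a I p s L m | RuleB \<Rightarrow> alloc_b I p s n L m))"

definition sys_round :: "(nat \<Rightarrow> real) \<Rightarrow> nat \<Rightarrow> int" where
  "sys_round m i = \<lfloor>\<Sum>j=1..i. m j\<rfloor> - \<lfloor>\<Sum>j=1..i-1. m j\<rfloor>"

text \<open>A trajectory n k i = N_i^k of the adaptive algorithm, given the sample values
  y i j = f(X_i^j) and the deterministic schedule Nseq k = N^k.\<close>
definition adaptive_traj :: "alloc_rule \<Rightarrow> nat \<Rightarrow> (nat \<Rightarrow> real) \<Rightarrow> (nat \<Rightarrow> nat)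
                              \<Rightarrow> (nat \<Rightarrow> nat \<Rightarrow> real) \<Rightarrow> (nat \<Rightarrow> nat \<Rightarrow> nat) \<Rightarrow> bool" where
  "adaptive_traj rule I p Nseq y n \<longleftrightarrow>
     (\<forall>i\<in>{1..I}. n 0 i = 0) \<and>
     (\<forall>k\<ge>1. \<exists>m. allocation rule I p
                    (\<lambda>i. if k = 1 then 1 else emp_sd (y i) (n (k-1) i))
                    (n (k-1)) (real (Nseq k - Nseq (k-1) - I)) m \<and>
                 (\<forall>i\<in>{1..I}. n k i = n (k-1) i + 1 + nat (sys_round m i)))"

definition strat_est :: "nat \<Rightarrow> (nat \<Rightarrow> real) \<Rightarrow> (nat \<Rightarrow> nat \<Rightarrow> real) \<Rightarrow> (nat \<Rightarrow> nat \<Rightarrow> nat) \<Rightarrow> nat \<Rightarrow> real" where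
  "strat_est I p y n k = (\<Sum>i=1..I. p i / real (n k i) * (\<Sum>j=1..n k i. y i j))"

end

theory Submission
  imports Defs
begin



lemma cesaro_real:
  fixes c :: "nat \<Rightarrow> real"
  assumes lim: "c \<longlonglongrightarrow> \<mu>"
  shows "(\<lambda>k. (\<Sum>j<k. c j) / real k) \<longlonglongrightarrow> \<mu>"
proof (rule LIMSEQ_I)
  fix r :: real assume r: "0 < r"
  obtain N where N: "\<And>n. n \<ge> N \<Longrightarrow> norm (c n - \<mu>) < r/2"
    using LIMSEQ_D[OF lim, of "r/2"] r by auto
  define C where "C = (\<Sum>j<N. \<bar>c j - \<mu>\<bar>)"
  have C0: "C \<ge> 0" unfolding C_def by (intro sum_nonneg) auto
  obtain K where K: "real K > 2 * C / r" using reals_Archimedean2 by blast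
  show "\<exists>no. \<forall>n\<ge>no. norm ((\<Sum>j<n. c j) / real n - \<mu>) < r"
  proof (intro exI[of _ "max (Suc N) (Suc K)"] allI impI)
    fix n assume n: "max (Suc N) (Suc K) \<le> n"
    hence npos: "real n > 0" and nN: "N \<le> n" and nK: "real K < real n" by auto
    have eq: "(\<Sum>j<n. c j) / real n - \<mu> = (\<Sum>j<n. c j - \<mu>) / real n"
      using npos by (simp add: sum_subtractf field_simps)
    have split: "(\<Sum>j<n. c j - \<mu>) = (\<Sum>j<N. c j - \<mu>) + (\<Sum>j\<in>{N..<n}. c j - \<mu>)"
      using nN by (metis atLeast0LessThan sum.atLeastLessThan_concat zero_le)
    have b1: "\<bar>\<Sum>j<N. c j - \<mu>\<bar> \<le> C" unfolding C_def by (rule sum_abs)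
    have "\<bar>\<Sum>j\<in>{N..<n}. c j - \<mu>\<bar> \<le> (\<Sum>j\<in>{N..<n}. \<bar>c j - \<mu>\<bar>)" by (rule sum_abs)
    also have "\<dots> \<le> (\<Sum>j\<in>{N..<n}. r/2)"
      using N by (intro sum_mono) (auto intro: less_imp_le)
    also have "\<dots> \<le> real n * (r/2)" using r by simp
    finally have b2: "\<bar>\<Sum>j\<in>{N..<n}. c j - \<mu>\<bar> \<le> real n * (r/2)" .
    have "C < real n * (r/2)"
    proof -
      have "2 * C / r < real n" using K nK by linarith
      thus ?thesis using r by (simp add: field_simps)
    qed
    hence "\<bar>\<Sum>j<n. c j - \<mu>\<bar> < real n * r" using b1 b2 split by (simp add: abs_triangle_ineq order_le_less_trans)
    thus "norm ((\<Sum>j<n. c j) / real n - \<mu>) < r"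
      using npos by (simp add: eq abs_divide field_simps)
  qed
qed




lemma interp:
  fixes T :: "nat \<Rightarrow> real" and k :: "nat \<Rightarrow> nat"
  assumes Tmono: "\<And>i j. i \<le> j \<Longrightarrow> T i \<le> T j"
    and T0: "\<And>m. 0 \<le> T m"
    and kmono: "\<And>i j. i \<le> j \<Longrightarrow> k i \<le> k j"
    and k0: "1 \<le> k 0"
    and kunb: "\<And>m. \<exists>n. m < k n"
    and lim: "(\<lambda>n. T (k n) / real (k n)) \<longlonglongrightarrow> \<mu>"
    and beta: "1 \<le> \<beta>"
    and ev: "eventually (\<lambda>n. real (k (Suc n)) \<le> \<beta> * real (k n)) sequentially"
    and eps: "0 < \<epsilon>"
  shows "eventually (\<lambda>m. T m / real m \<le> \<beta>*\<mu> + \<epsilon> \<and> \<mu>/\<beta> - \<epsilon> \<le> T m / real m) sequentially"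
proof -
  define u where "u n = T (k n) / real (k n)" for n
  have u0: "0 \<le> u n" for n unfolding u_def using T0 by simp
  define idx where "idx m = Max {n. k n \<le> m}" for m
  have fin: "finite {n. k n \<le> m}" for m
  proof -
    obtain N where N: "m < k N" using kunb by blast
    have "{n. k n \<le> m} \<subseteq> {..N}"
    proof
      fix n assume "n \<in> {n. k n \<le> m}"
      hence "k n \<le> m" by simp
      show "n \<in> {..N}"
      proof (rule ccontr)
        assume "n \<notin> {..N}" hence "N \<le> n" by simp
        hence "k N \<le> k n" by (rule kmono)
        thus False using N \<open>k n \<le> m\<close> by simp
      qed
    qed
    thus ?thesis using finite_subset by blast
  qed
  have idx1: "k (idx m) \<le> m" and idx2: "m < k (Suc (idx m))" if "k 0 \<le> m" for m
  proof -
    have ne: "0 \<in> {n. k n \<le> m}" using that by simp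
    show "k (idx m) \<le> m" unfolding idx_def using Max_in[OF fin, of m] ne by auto
    show "m < k (Suc (idx m))"
    proof (rule ccontr)
      assume "\<not> m < k (Suc (idx m))"
      hence "Suc (idx m) \<in> {n. k n \<le> m}" by simp
      hence "Suc (idx m) \<le> idx m" unfolding idx_def using Max_ge[OF fin] by blast
      thus False by simp
    qed
  qed
  have idx_lim: "filterlim idx at_top sequentially"
    unfolding filterlim_at_top
  proof (intro allI eventually_sequentiallyI)
    fix N m assume m: "k N \<le> m"
    have "N \<in> {n. k n \<le> m}" using m by simp
    thus "N \<le> idx m" unfolding idx_def using Max_ge[OF fin] by blast
  qed
  have lu: "u \<longlonglongrightarrow> \<mu>" using lim unfolding u_def .
  have l1: "(\<lambda>m. \<beta> * u (Suc (idx m))) \<longlonglongrightarrow> \<beta> * \<mu>"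
    by (intro tendsto_mult tendsto_const filterlim_compose[OF lu] filterlim_compose[OF filterlim_Suc idx_lim])
  have l2: "(\<lambda>m. u (idx m) / \<beta>) \<longlonglongrightarrow> \<mu> / \<beta>"
    using beta by (intro tendsto_divide tendsto_const filterlim_compose[OF lu idx_lim]) auto
  have e1: "eventually (\<lambda>m. \<beta> * u (Suc (idx m)) < \<beta>*\<mu> + \<epsilon>) sequentially"
    using order_tendstoD(2)[OF l1] eps by simp
  have e2: "eventually (\<lambda>m. \<mu>/\<beta> - \<epsilon> < u (idx m) / \<beta>) sequentially"
    using order_tendstoD(1)[OF l2] eps by simp
  have e3: "eventually (\<lambda>m. real (k (Suc (idx m))) \<le> \<beta> * real (k (idx m))) sequentially"
    using filterlim_iff[THEN iffD1, OF idx_lim, rule_format, OF ev] by simp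
  have e4: "eventually (\<lambda>m. k 0 \<le> m) sequentially" by (rule eventually_ge_at_top)
  show ?thesis
  proof (rule eventually_mono[OF eventually_conj[OF eventually_conj[OF e1 e2] eventually_conj[OF e3 e4]]])
    fix m assume H: "(\<beta> * u (Suc (idx m)) < \<beta> * \<mu> + \<epsilon> \<and> \<mu> / \<beta> - \<epsilon> < u (idx m) / \<beta>) \<and>
             real (k (Suc (idx m))) \<le> \<beta> * real (k (idx m)) \<and> k 0 \<le> m"
    define a where "a = k (idx m)"
    define b where "b = k (Suc (idx m))"
    have am: "a \<le> m" and mb: "m < b" using idx1 idx2 H unfolding a_def b_def by auto
    have apos: "1 \<le> a" unfolding a_def using kmono[of 0 "idx m"] k0 by simp
    have bbeta: "real b \<le> \<beta> * real a" using H unfolding a_def b_def by simp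
    have mpos: "0 < real m" using am apos by simp
    have Tb: "T m \<le> T b" using mb by (intro Tmono) simp
    have Ta: "T a \<le> T m" using am by (intro Tmono)
    have "T m / real m \<le> T b / real a"
      using Tb am apos T0[of m] mpos by (intro frac_le) auto
    also have "T b / real a = u (Suc (idx m)) * (real b / real a)"
      unfolding u_def b_def a_def using apos mb am by (simp add: a_def b_def field_simps)
    also have "\<dots> \<le> u (Suc (idx m)) * \<beta>"
      using bbeta apos u0 by (intro mult_left_mono) (auto simp: field_simps)
    finally have up: "T m / real m \<le> \<beta> * u (Suc (idx m))" by (simp add: mult.commute)
    have "u (idx m) / \<beta> = T a / (\<beta> * real a)" unfolding u_def a_def by simp
    also have "\<dots> \<le> T a / real b"
      using bbeta apos mb T0[of a] by (intro divide_left_mono) auto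
    also have "\<dots> \<le> T m / real m"
      using Ta mb mpos T0[of a] by (intro frac_le) auto
    finally have lo: "u (idx m) / \<beta> \<le> T m / real m" .
    show "T m / real m \<le> \<beta> * \<mu> + \<epsilon> \<and> \<mu> / \<beta> - \<epsilon> \<le> T m / real m"
      using up lo H by linarith
  qed
qed




lemma combine:
  fixes s :: "nat \<Rightarrow> real" and \<beta> :: "nat \<Rightarrow> real"
  assumes b1: "\<beta> \<longlonglongrightarrow> 1" and bpos: "\<And>l. 0 < \<beta> l"
    and ev: "\<And>l \<epsilon>. 0 < \<epsilon> \<Longrightarrow> eventually (\<lambda>m. s m \<le> \<beta> l * \<mu> + \<epsilon> \<and> \<mu> / \<beta> l - \<epsilon> \<le> s m) sequentially"
  shows "s \<longlonglongrightarrow> \<mu>"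
proof (rule order_tendstoI)
  fix a assume a: "a > \<mu>"
  have "(\<lambda>l. \<beta> l * \<mu>) \<longlonglongrightarrow> 1 * \<mu>" by (intro tendsto_intros b1)
  hence "eventually (\<lambda>l. \<beta> l * \<mu> < a) sequentially" using order_tendstoD(2) a by simp
  then obtain l where l: "\<beta> l * \<mu> < a" by (meson eventually_sequentially order_refl)
  show "eventually (\<lambda>m. s m < a) sequentially"
  proof -
    have "0 < (a - \<beta> l * \<mu>)/2" using l by simp
    from ev[OF this, of l] show ?thesis
    proof (rule eventually_mono)
      fix x assume "s x \<le> \<beta> l * \<mu> + (a - \<beta> l * \<mu>) / 2 \<and> \<mu> / \<beta> l - (a - \<beta> l * \<mu>) / 2 \<le> s x"
      moreover have "\<beta> l * \<mu> + (a - \<beta> l * \<mu>) / 2 < a" using l by (simp add: field_simps)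
      ultimately show "s x < a" by (elim conjE) (rule le_less_trans)
    qed
  qed
next
  fix a assume a: "a < \<mu>"
  have "(\<lambda>l. \<mu> / \<beta> l) \<longlonglongrightarrow> \<mu> / 1" by (intro tendsto_intros b1) simp
  hence "eventually (\<lambda>l. a < \<mu> / \<beta> l) sequentially" using order_tendstoD(1) a by simp
  then obtain l where l: "a < \<mu> / \<beta> l" by (meson eventually_sequentially order_refl)
  show "eventually (\<lambda>m. a < s m) sequentially"
  proof -
    have "0 < (\<mu> / \<beta> l - a)/2" using l by simp
    from ev[OF this, of l] show ?thesis
    proof (rule eventually_mono)
      fix x assume "s x \<le> \<beta> l * \<mu> + (\<mu> / \<beta> l - a)/2 \<and> \<mu> / \<beta> l - (\<mu> / \<beta> l - a)/2 \<le> s x"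
      moreover have "a < \<mu> / \<beta> l - (\<mu> / \<beta> l - a)/2" using l by (simp add: field_simps)
      ultimately show "a < s x" by (elim conjE) (rule less_le_trans)
    qed
  qed
qed

definition kseq :: "real \<Rightarrow> nat \<Rightarrow> nat" where "kseq \<alpha> n = nat \<lfloor>\<alpha> ^ n\<rfloor>"

lemma kseq_props:
  assumes a: "1 < \<alpha>"
  shows "1 \<le> kseq \<alpha> n" and "real (kseq \<alpha> n) \<le> \<alpha> ^ n" and "\<alpha> ^ n \<le> 2 * real (kseq \<alpha> n)"
    and "i \<le> j \<Longrightarrow> kseq \<alpha> i \<le> kseq \<alpha> j"
    and "\<exists>n. m < kseq \<alpha> n"
proof -
  have p1: "1 \<le> \<alpha> ^ n" for n using a by (simp add: one_le_power)
  show "1 \<le> kseq \<alpha> n" unfolding kseq_def using p1[of n]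
    by (metis Num.of_nat_simps(2) le_nat_floor of_nat_1)
  show "real (kseq \<alpha> n) \<le> \<alpha> ^ n" unfolding kseq_def using p1[of n] by simp
  have "\<alpha> ^ n \<le> 2 * real_of_int \<lfloor>\<alpha> ^ n\<rfloor>"
  proof -
    have "\<alpha> ^ n < real_of_int \<lfloor>\<alpha> ^ n\<rfloor> + 1" by linarith
    moreover have "1 \<le> real_of_int \<lfloor>\<alpha> ^ n\<rfloor>" using p1[of n] by simp
    ultimately show ?thesis by linarith
  qed
  thus "\<alpha> ^ n \<le> 2 * real (kseq \<alpha> n)" unfolding kseq_def using p1[of n] by simp
  show "i \<le> j \<Longrightarrow> kseq \<alpha> i \<le> kseq \<alpha> j" unfolding kseq_def
    using a by (intro nat_mono floor_mono power_increasing) auto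
  obtain n where n: "real m + 1 < \<alpha> ^ n" using real_arch_pow[OF a] by blast
  hence "m < kseq \<alpha> n" unfolding kseq_def by linarith
  thus "\<exists>n. m < kseq \<alpha> n" by blast
qed

lemma kseq_ratio:
  assumes a: "1 < \<alpha>"
  shows "eventually (\<lambda>n. real (kseq \<alpha> (Suc n)) \<le> \<alpha>^2 * real (kseq \<alpha> n)) sequentially"
proof -
  obtain N where N: "\<alpha> / (\<alpha> - 1) < \<alpha> ^ N" using real_arch_pow[OF a] by blast
  show ?thesis
  proof (rule eventually_sequentiallyI[of N])
    fix n assume n: "N \<le> n"
    have "\<alpha> ^ N \<le> \<alpha> ^ n" using n a by (intro power_increasing) auto
    hence big: "\<alpha> / (\<alpha> - 1) \<le> \<alpha> ^ n" using N by linarith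
    have "real (kseq \<alpha> (Suc n)) \<le> \<alpha> ^ Suc n" by (rule kseq_props(2)[OF a])
    also have "\<dots> \<le> \<alpha>^2 * (\<alpha> ^ n - 1)"
    proof -
      have "\<alpha> \<le> \<alpha> ^ n * (\<alpha> - 1)" using big a by (simp add: field_simps)
      hence "\<alpha> * \<alpha> \<le> \<alpha> * (\<alpha> ^ n * (\<alpha> - 1))" using a by (intro mult_left_mono) auto
      thus ?thesis by (simp add: power2_eq_square algebra_simps)
    qed
    also have "\<dots> \<le> \<alpha>^2 * real (kseq \<alpha> n)"
    proof -
      have "\<alpha> ^ n - 1 \<le> real (kseq \<alpha> n)" unfolding kseq_def
        using one_le_power[of \<alpha> n] a by linarith
      thus ?thesis by (intro mult_left_mono) auto
    qed
    finally show "real (kseq \<alpha> (Suc n)) \<le> \<alpha>\<^sup>2 * real (kseq \<alpha> n)" .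
  qed
qed

lemma kseq_sum_bound:
  assumes a: "1 < \<alpha>" and y: "0 \<le> y"
  shows "(\<Sum>n. ennreal (y^2 * (if y \<le> real (kseq \<alpha> n) then 1 / real (kseq \<alpha> n) else 0)))
           \<le> ennreal (2 * \<alpha> / (\<alpha> - 1) * y)"
proof (cases "y = 0")
  case True thus ?thesis by simp
next
  case False
  hence ypos: "0 < y" using y by simp
  define r where "r = 1 / \<alpha>"
  have r0: "0 < r" "r < 1" using a unfolding r_def by auto
  define g where "g n = (if y \<le> \<alpha> ^ n then r ^ n else 0)" for n
  have ex: "\<exists>n. y \<le> \<alpha> ^ n" using real_arch_pow[OF a, of y] by (auto intro: less_imp_le)
  define n0 where "n0 = (LEAST n. y \<le> \<alpha> ^ n)"
  have n0: "y \<le> \<alpha> ^ n0" unfolding n0_def using LeastI_ex[OF ex] .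
  have below: "n < n0 \<Longrightarrow> \<not> y \<le> \<alpha> ^ n" for n unfolding n0_def using not_less_Least by blast
  have above: "y \<le> \<alpha> ^ n" if "n0 \<le> n" for n
  proof -
    have "\<alpha>^n0 \<le> \<alpha>^n" using that a by (intro power_increasing) auto
    thus ?thesis using n0 by linarith
  qed
  have gs: "g sums (r ^ n0 / (1 - r))"
  proof -
    have "(\<lambda>i. g (i + n0)) = (\<lambda>i. r ^ n0 * r ^ i)"
    proof
      fix i have "y \<le> \<alpha> ^ (i + n0)" by (rule above) simp
      thus "g (i + n0) = r ^ n0 * r ^ i" unfolding g_def by (simp add: power_add)
    qed
    moreover have "(\<lambda>i. r ^ n0 * r ^ i) sums (r ^ n0 * (1 / (1 - r)))"
      using r0 by (intro sums_mult geometric_sums) auto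
    ultimately have "(\<lambda>i. g (i + n0)) sums (r ^ n0 / (1 - r))" by simp
    thus ?thesis using sums_zero_iff_shift[of n0 g] below unfolding g_def by auto
  qed
  have rn0: "r ^ n0 \<le> 1 / y"
    unfolding r_def using n0 ypos a by (simp add: power_one_over field_simps)
  have trm: "y^2 * (if y \<le> real (kseq \<alpha> n) then 1 / real (kseq \<alpha> n) else 0) \<le> 2 * y^2 * g n" for n
  proof (cases "y \<le> real (kseq \<alpha> n)")
    case True
    have k1: "1 \<le> real (kseq \<alpha> n)" using kseq_props(1)[OF a] by simp
    have yy: "y \<le> \<alpha> ^ n" using True kseq_props(2)[OF a, of n] by linarith
    have "1 / real (kseq \<alpha> n) \<le> 2 / \<alpha> ^ n"
      using kseq_props(3)[OF a, of n] k1 a by (simp add: field_simps)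
    also have "2 / \<alpha> ^ n = 2 * r ^ n" unfolding r_def by (simp add: power_one_over)
    finally have "y^2 * (1 / real (kseq \<alpha> n)) \<le> y^2 * (2 * r ^ n)"
      by (intro mult_left_mono) auto
    thus ?thesis using True yy unfolding g_def by simp
  next
    case False thus ?thesis using r0 unfolding g_def by auto
  qed
  have g0: "0 \<le> g n" for n unfolding g_def using r0 by auto
  have "(\<Sum>n. ennreal (y^2 * (if y \<le> real (kseq \<alpha> n) then 1 / real (kseq \<alpha> n) else 0)))
        \<le> (\<Sum>n. ennreal (2 * y^2 * g n))"
    by (intro suminf_le ennreal_leI trm) auto
  also have "\<dots> = ennreal (\<Sum>n. 2 * y^2 * g n)"
    using g0 gs by (intro suminf_ennreal2 summable_mult sums_summable) auto
  also have "(\<Sum>n. 2 * y^2 * g n) \<le> 2 * \<alpha> / (\<alpha> - 1) * y"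
  proof -
    have "(\<Sum>n. 2 * y^2 * g n) = 2 * y^2 * (r ^ n0 / (1 - r))"
      using sums_unique[OF sums_mult[OF gs, of "2*y^2"]] by simp
    also have "\<dots> \<le> 2 * y^2 * ((1/y) / (1 - r))"
      using rn0 r0 by (intro mult_left_mono divide_right_mono) auto
    also have "\<dots> = 2 * \<alpha> / (\<alpha> - 1) * y"
      using ypos a unfolding r_def by (simp add: field_simps power2_eq_square)
    finally show ?thesis .
  qed
  hence "ennreal (\<Sum>n. 2 * y^2 * g n) \<le> ennreal (2 * \<alpha> / (\<alpha> - 1) * y)" by (rule ennreal_leI)
  finally show ?thesis by simp
qed




context prob_space begin

lemma distr_eq_integral:
  fixes X Z :: "'a \<Rightarrow> real" and g :: "real \<Rightarrow> real"
  assumes "distr M borel X = distr M borel Z" "X \<in> borel_measurable M" "Z \<in> borel_measurable M"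
    "g \<in> borel_measurable borel"
  shows "(\<integral>x. g (X x) \<partial>M) = (\<integral>x. g (Z x) \<partial>M)"
  using integral_distr[OF assms(2,4)] integral_distr[OF assms(3,4)] assms(1) by simp

lemma distr_eq_integrable:
  fixes X Z :: "'a \<Rightarrow> real" and g :: "real \<Rightarrow> real"
  assumes "distr M borel X = distr M borel Z" "X \<in> borel_measurable M" "Z \<in> borel_measurable M"
    "g \<in> borel_measurable borel"
  shows "integrable M (\<lambda>x. g (X x)) \<longleftrightarrow> integrable M (\<lambda>x. g (Z x))"
  using integrable_distr_eq[OF assms(2,4)] integrable_distr_eq[OF assms(3,4)] assms(1) by simp

lemma distr_eq_nn_integral:
  fixes X Z :: "'a \<Rightarrow> real" and g :: "real \<Rightarrow> ennreal"
  assumes "distr M borel X = distr M borel Z" "X \<in> borel_measurable M" "Z \<in> borel_measurable M"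
    "g \<in> borel_measurable borel"
  shows "(\<integral>\<^sup>+x. g (X x) \<partial>M) = (\<integral>\<^sup>+x. g (Z x) \<partial>M)"
  using nn_integral_distr[OF assms(2), of g] nn_integral_distr[OF assms(3), of g] assms(1,4) by simp

lemma AE_summable:
  fixes D :: "nat \<Rightarrow> 'a \<Rightarrow> real"
  assumes meas: "\<And>n. D n \<in> borel_measurable M" and nn: "\<And>n x. 0 \<le> D n x"
    and fin: "(\<Sum>n. \<integral>\<^sup>+x. ennreal (D n x) \<partial>M) < \<infinity>"
  shows "AE x in M. summable (\<lambda>n. D n x)"
proof -
  have "(\<integral>\<^sup>+x. (\<Sum>n. ennreal (D n x)) \<partial>M) = (\<Sum>n. \<integral>\<^sup>+x. ennreal (D n x) \<partial>M)"
    using meas by (intro nn_integral_suminf) auto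
  hence "(\<integral>\<^sup>+x. (\<Sum>n. ennreal (D n x)) \<partial>M) \<noteq> \<infinity>" using fin by simp
  hence "AE x in M. (\<Sum>n. ennreal (D n x)) \<noteq> \<infinity>"
    using meas by (intro nn_integral_PInf_AE) auto
  thus ?thesis
  proof (rule AE_mp, intro AE_I2 impI)
    fix x assume "(\<Sum>n. ennreal (D n x)) \<noteq> \<infinity>"
    thus "summable (\<lambda>n. D n x)" using nn by (intro summable_suminf_not_top) auto
  qed
qed

lemma sum_sq_indep:
  fixes W :: "nat \<Rightarrow> 'a \<Rightarrow> real"
  assumes meas: "\<And>j. W j \<in> borel_measurable M"
    and bnd: "\<And>j. \<exists>B. \<forall>x\<in>space M. \<bar>W j x\<bar> \<le> B"
    and ind: "\<And>i j. i \<noteq> j \<Longrightarrow> indep_var borel (W i) borel (W j)"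
    and mean: "\<And>j. expectation (W j) = 0"
  shows "expectation (\<lambda>x. (\<Sum>j<m. W j x)^2) = (\<Sum>j<m. expectation (\<lambda>x. (W j x)^2))"
proof -
  have intW: "integrable M (W j)" for j
  proof -
    obtain B where "\<forall>x\<in>space M. \<bar>W j x\<bar> \<le> B" using bnd by blast
    thus ?thesis using meas by (intro integrable_const_bound[where B=B]) auto
  qed
  have intWW: "integrable M (\<lambda>x. W i x * W j x)" for i j
  proof -
    obtain B1 where B1: "\<forall>x\<in>space M. \<bar>W i x\<bar> \<le> B1" using bnd by blast
    obtain B2 where B2: "\<forall>x\<in>space M. \<bar>W j x\<bar> \<le> B2" using bnd by blast
    have "\<forall>x\<in>space M. \<bar>W i x * W j x\<bar> \<le> B1 * B2"
      using B1 B2 by (auto simp: abs_mult intro!: mult_mono')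
    thus ?thesis using meas by (intro integrable_const_bound[where B="B1*B2"]) auto
  qed
  have sq: "(\<Sum>j<m. W j x)^2 = (\<Sum>i<m. \<Sum>j<m. W i x * W j x)" for x
    by (simp add: power2_eq_square sum_product)
  have cross: "expectation (\<lambda>x. W i x * W j x) = (if i = j then expectation (\<lambda>x. (W j x)^2) else 0)" for i j
  proof (cases "i = j")
    case True thus ?thesis by (simp add: power2_eq_square)
  next
    case False
    have "expectation (\<lambda>x. W i x * W j x) = expectation (W i) * expectation (W j)"
      by (rule indep_var_lebesgue_integral[OF ind[OF False] intW intW])
    thus ?thesis using mean False by simp
  qed
  have "expectation (\<lambda>x. (\<Sum>j<m. W j x)^2) = expectation (\<lambda>x. \<Sum>i<m. \<Sum>j<m. W i x * W j x)"
    by (simp add: sq)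
  also have "\<dots> = (\<Sum>i<m. \<Sum>j<m. expectation (\<lambda>x. W i x * W j x))"
    using intWW by (simp add: integral_sum integrable_sum)
  also have "\<dots> = (\<Sum>i<m. \<Sum>j<m. (if i = j then expectation (\<lambda>x. (W j x)^2) else 0))"
    by (simp add: cross)
  also have "\<dots> = (\<Sum>j<m. expectation (\<lambda>x. (W j x)^2))"
    by (simp add: sum.delta)
  finally show ?thesis .
qed

end



lemma count_bound:
  fixes y :: real assumes y: "0 \<le> y"
  shows "(\<Sum>j. ennreal (if real j + 1 < y then 1 else 0)) \<le> ennreal y"
proof -
  define N where "N = nat \<lfloor>y\<rfloor>"
  have "(\<Sum>j. ennreal (if real j + 1 < y then 1 else 0)) = (\<Sum>j\<in>{..<N}. ennreal (if real j + 1 < y then 1 else 0))"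
  proof (rule suminf_finite)
    fix j assume "j \<notin> {..<N}"
    hence "N \<le> j" by simp
    hence "real_of_int \<lfloor>y\<rfloor> \<le> real j" unfolding N_def using y by linarith
    hence "\<not> real j + 1 < y" by linarith
    thus "ennreal (if real j + 1 < y then 1 else 0) = 0" by simp
  qed simp
  also have "\<dots> \<le> (\<Sum>j\<in>{..<N}. 1)" by (intro sum_mono) auto
  also have "\<dots> = ennreal (real N)" by (simp add: ennreal_of_nat_eq_real_of_nat)
  also have "\<dots> \<le> ennreal y" unfolding N_def using y by (intro ennreal_leI) linarith
  finally show ?thesis .
qed

context prob_space begin

lemma slln_nonneg:
  fixes Y :: "nat \<Rightarrow> 'a \<Rightarrow> real"
  assumes rv[measurable]: "\<And>j. Y j \<in> borel_measurable M"
    and ind: "\<And>i j. i \<noteq> j \<Longrightarrow> indep_var borel (Y i) borel (Y j)"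
    and idd: "\<And>j. distr M borel (Y j) = distr M borel (Y 0)"
    and nn: "\<And>j x. 0 \<le> Y j x"
    and int: "integrable M (Y 0)"
  shows "AE x in M. (\<lambda>n. (\<Sum>j<n. Y j x) / real n) \<longlonglongrightarrow> expectation (Y 0)"
proof -
  define \<mu> where "\<mu> = expectation (Y 0)"
  define h where "h j y = (if y \<le> real j + 1 then y else 0)" for j :: nat and y :: real
  have h_meas[measurable]: "h j \<in> borel_measurable borel" for j unfolding h_def by measurable
  define Z where "Z j x = h j (Y j x)" for j x
  have Z_meas[measurable]: "Z j \<in> borel_measurable M" for j unfolding Z_def by measurable
  have Z_nn: "0 \<le> Z j x" for j x unfolding Z_def h_def using nn[of j x] by auto
  have Z_bnd: "Z j x \<le> real j + 1" for j x unfolding Z_def h_def by auto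
  have Z_int: "integrable M (Z j)" for j
    using Z_nn Z_bnd by (intro integrable_const_bound[where B="real j + 1"]) auto
  define c where "c j = expectation (Z j)" for j
  have c_eq: "c j = expectation (\<lambda>x. h j (Y 0 x))" for j
    unfolding c_def Z_def by (rule distr_eq_integral[OF idd]) auto
  have c_lim: "c \<longlonglongrightarrow> \<mu>"
  proof -
    have "(\<lambda>j. expectation (\<lambda>x. h j (Y 0 x))) \<longlonglongrightarrow> expectation (Y 0)"
    proof (rule integral_dominated_convergence[where w="Y 0"])
      show "AE x in M. (\<lambda>j. h j (Y 0 x)) \<longlonglongrightarrow> Y 0 x"
      proof (intro AE_I2 tendsto_eventually)
        fix x
        obtain N :: nat where "Y 0 x \<le> real N" using real_arch_simple by blast
        thus "eventually (\<lambda>j. h j (Y 0 x) = Y 0 x) sequentially"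
          unfolding h_def by (intro eventually_sequentiallyI[of N]) auto
      qed
      show "AE x in M. norm (h j (Y 0 x)) \<le> Y 0 x" for j
        using nn unfolding h_def by auto
    qed (use int in auto)
    thus ?thesis unfolding c_eq \<mu>_def .
  qed
  define T where "T m x = (\<Sum>j<m. Z j x)" for m x

  have partA: "AE x in M. eventually (\<lambda>j. Y j x = Z j x) sequentially"
  proof -
    define D where "D j x = (if real j + 1 < Y j x then 1 else 0::real)" for j x
    have D_meas[measurable]: "D j \<in> borel_measurable M" for j unfolding D_def by measurable
    have D_int: "(\<integral>\<^sup>+x. ennreal (D j x) \<partial>M) = (\<integral>\<^sup>+x. ennreal (if real j + 1 < Y 0 x then 1 else 0) \<partial>M)" for j
      unfolding D_def
      by (rule distr_eq_nn_integral[OF idd, where g="\<lambda>y. ennreal (if real j + 1 < y then 1 else 0)"]) auto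
    have "(\<Sum>j. \<integral>\<^sup>+x. ennreal (D j x) \<partial>M) = (\<integral>\<^sup>+x. (\<Sum>j. ennreal (if real j + 1 < Y 0 x then 1 else 0)) \<partial>M)"
      unfolding D_int by (intro nn_integral_suminf[symmetric]) auto
    also have "\<dots> \<le> (\<integral>\<^sup>+x. ennreal (Y 0 x) \<partial>M)"
      by (intro nn_integral_mono count_bound nn)
    also have "\<dots> = ennreal \<mu>" unfolding \<mu>_def using nn by (intro nn_integral_eq_integral int) auto
    finally have "(\<Sum>j. \<integral>\<^sup>+x. ennreal (D j x) \<partial>M) < \<infinity>" using le_less_trans by fastforce
    hence "AE x in M. summable (\<lambda>j. D j x)"
      by (intro AE_summable) (auto simp: D_def)
    thus ?thesis
    proof (rule AE_mp, intro AE_I2 impI)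
      fix x assume "summable (\<lambda>j. D j x)"
      hence "(\<lambda>j. D j x) \<longlonglongrightarrow> 0" by (rule summable_LIMSEQ_zero)
      hence "eventually (\<lambda>j. D j x < 1) sequentially" by (rule order_tendstoD) simp
      thus "eventually (\<lambda>j. Y j x = Z j x) sequentially"
        by (rule eventually_mono) (auto simp: D_def Z_def h_def split: if_splits)
    qed
  qed

  have partB: "AE x in M. (\<lambda>n. T (kseq \<alpha> n) x / real (kseq \<alpha> n)) \<longlonglongrightarrow> \<mu>" if a: "1 < \<alpha>" for \<alpha>
  proof -
    define k where "k = kseq \<alpha>"
    have k1: "1 \<le> k n" for n unfolding k_def by (rule kseq_props(1)[OF a])
    define W where "W j x = Z j x - c j" for j x
    have W_meas[measurable]: "W j \<in> borel_measurable M" for j unfolding W_def by measurable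
    have W_bnd: "\<bar>W j x\<bar> \<le> real j + 1 + \<bar>c j\<bar>" for j x
      using Z_nn[of j x] Z_bnd[of j x] unfolding W_def by linarith
    have W_ind: "indep_var borel (W i) borel (W j)" if ij: "i \<noteq> j" for i j
    proof -
      have "indep_var borel ((\<lambda>y. h i y - c i) \<circ> Y i) borel ((\<lambda>y. h j y - c j) \<circ> Y j)"
        by (rule indep_var_compose[OF ind[OF ij]]) auto
      thus ?thesis unfolding W_def Z_def comp_def .
    qed
    have W_mean: "expectation (W j) = 0" for j
      unfolding W_def c_def using Z_int[of j] by (simp add: prob_space)
    define q where "q m y = y^2 * (if y \<le> real m then 1 else 0)" for m :: nat and y :: real
    have q_meas[measurable]: "q m \<in> borel_measurable borel" for m unfolding q_def by measurable
    have q_int: "integrable M (\<lambda>x. q m (Y 0 x))" for m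
    proof (rule integrable_const_bound[where B="(real m)^2"])
      show "AE x in M. norm (q m (Y 0 x)) \<le> (real m)^2"
      proof (intro AE_I2)
        fix x
        have "0 \<le> Y 0 x" by (rule nn)
        thus "norm (q m (Y 0 x)) \<le> (real m)^2" unfolding q_def
          by (auto intro: power_mono)
      qed
    qed measurable
    have W_sq: "expectation (\<lambda>x. (W j x)^2) \<le> expectation (\<lambda>x. q m (Y 0 x))" if jm: "j < m" for j m
    proof -
      have Z2_int: "integrable M (\<lambda>x. (Z j x)^2)"
      proof (rule integrable_const_bound[where B="(real j + 1)^2"])
        show "AE x in M. norm ((Z j x)^2) \<le> (real j + 1)^2"
          using Z_nn Z_bnd by (auto intro!: power_mono)
      qed measurable
      have "expectation (\<lambda>x. (W j x)^2) = expectation (\<lambda>x. (Z j x)^2) - (c j)^2"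
        unfolding W_def c_def by (rule variance_eq[OF Z_int Z2_int])
      also have "\<dots> \<le> expectation (\<lambda>x. (Z j x)^2)" by simp
      also have "expectation (\<lambda>x. (Z j x)^2) = expectation (\<lambda>x. (h j (Y 0 x))^2)"
        unfolding Z_def by (rule distr_eq_integral[OF idd, where g="\<lambda>y. (h j y)^2"]) auto
      also have "\<dots> \<le> expectation (\<lambda>x. q m (Y 0 x))"
      proof (rule integral_mono)
        show "integrable M (\<lambda>x. (h j (Y 0 x))^2)"
          using Z2_int distr_eq_integrable[OF idd, of j "\<lambda>y. (h j y)^2"] unfolding Z_def by simp
        show "integrable M (\<lambda>x. q m (Y 0 x))" by (rule q_int)
        fix x
        show "(h j (Y 0 x))^2 \<le> q m (Y 0 x)"
          using jm unfolding h_def q_def by auto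
      qed
      finally show ?thesis .
    qed
    define S where "S n x = (\<Sum>j<k n. W j x)" for n x
    have S_meas[measurable]: "S n \<in> borel_measurable M" for n unfolding S_def by measurable
    have S_int: "integrable M (\<lambda>x. (S n x)^2)" for n
    proof (rule integrable_const_bound[where B="(\<Sum>j<k n. real j + 1 + \<bar>c j\<bar>)^2"])
      show "AE x in M. norm ((S n x)^2) \<le> (\<Sum>j<k n. real j + 1 + \<bar>c j\<bar>)^2"
      proof (intro AE_I2)
        fix x
        have "\<bar>S n x\<bar> \<le> (\<Sum>j<k n. \<bar>W j x\<bar>)" unfolding S_def by (rule sum_abs)
        also have "\<dots> \<le> (\<Sum>j<k n. real j + 1 + \<bar>c j\<bar>)" by (intro sum_mono W_bnd)
        finally have "\<bar>S n x\<bar>^2 \<le> (\<Sum>j<k n. real j + 1 + \<bar>c j\<bar>)^2"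
          by (intro power_mono) auto
        thus "norm ((S n x)^2) \<le> (\<Sum>j<k n. real j + 1 + \<bar>c j\<bar>)^2" by simp
      qed
    qed measurable
    define D where "D n x = (S n x / real (k n))^2" for n x
    have D_meas[measurable]: "D n \<in> borel_measurable M" for n unfolding D_def by measurable
    define r where "r n y = y^2 * (if y \<le> real (k n) then 1 / real (k n) else 0)" for n y
    have r_meas[measurable]: "r n \<in> borel_measurable borel" for n unfolding r_def by measurable
    have r_q: "r n y = q (k n) y / real (k n)" for n y unfolding r_def q_def by simp
    have D_bound: "(\<integral>\<^sup>+x. ennreal (D n x) \<partial>M) \<le> (\<integral>\<^sup>+x. ennreal (r n (Y 0 x)) \<partial>M)" for n
    proof -
      have D_int: "integrable M (D n)" unfolding D_def
        using S_int[of n] by (simp add: power_divide)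
      have "(\<integral>\<^sup>+x. ennreal (D n x) \<partial>M) = ennreal (expectation (D n))"
        by (intro nn_integral_eq_integral D_int) (auto simp: D_def)
      also have "expectation (D n) \<le> expectation (\<lambda>x. r n (Y 0 x))"
      proof -
        have "expectation (D n) = expectation (\<lambda>x. (S n x)^2) / (real (k n))^2"
          unfolding D_def by (simp add: power_divide)
        also have "expectation (\<lambda>x. (S n x)^2) = (\<Sum>j<k n. expectation (\<lambda>x. (W j x)^2))"
          unfolding S_def
        proof (rule sum_sq_indep)
          show "\<exists>B. \<forall>x\<in>space M. \<bar>W j x\<bar> \<le> B" for j using W_bnd by blast
        qed (auto intro: W_ind W_mean)
        also have "\<dots> \<le> (\<Sum>j<k n. expectation (\<lambda>x. q (k n) (Y 0 x)))"
          by (intro sum_mono W_sq) auto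
        also have "\<dots> = real (k n) * expectation (\<lambda>x. q (k n) (Y 0 x))" by simp
        finally have "expectation (D n) \<le> real (k n) * expectation (\<lambda>x. q (k n) (Y 0 x)) / (real (k n))^2"
          by (simp add: divide_right_mono)
        also have "\<dots> = expectation (\<lambda>x. q (k n) (Y 0 x)) / real (k n)"
          using k1[of n] by (simp add: power2_eq_square)
        also have "\<dots> = expectation (\<lambda>x. r n (Y 0 x))"
          unfolding r_q by simp
        finally show ?thesis .
      qed
      hence "ennreal (expectation (D n)) \<le> ennreal (expectation (\<lambda>x. r n (Y 0 x)))" by (rule ennreal_leI)
      also have "ennreal (expectation (\<lambda>x. r n (Y 0 x))) = (\<integral>\<^sup>+x. ennreal (r n (Y 0 x)) \<partial>M)"
      proof (rule nn_integral_eq_integral[symmetric])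
        show "integrable M (\<lambda>x. r n (Y 0 x))" unfolding r_q using q_int by simp
        show "AE x in M. 0 \<le> r n (Y 0 x)" unfolding r_def by auto
      qed
      finally show ?thesis .
    qed
    have "(\<Sum>n. \<integral>\<^sup>+x. ennreal (D n x) \<partial>M) \<le> (\<Sum>n. \<integral>\<^sup>+x. ennreal (r n (Y 0 x)) \<partial>M)"
      by (intro suminf_le D_bound) auto
    also have "\<dots> = (\<integral>\<^sup>+x. (\<Sum>n. ennreal (r n (Y 0 x))) \<partial>M)"
      by (intro nn_integral_suminf[symmetric]) auto
    also have "\<dots> \<le> (\<integral>\<^sup>+x. ennreal (2 * \<alpha> / (\<alpha> - 1) * Y 0 x) \<partial>M)"
      unfolding r_def k_def by (intro nn_integral_mono kseq_sum_bound[OF a] nn)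
    also have "\<dots> = ennreal (expectation (\<lambda>x. 2 * \<alpha> / (\<alpha> - 1) * Y 0 x))"
      using a nn by (intro nn_integral_eq_integral integrable_mult_right int) auto
    also have "\<dots> = ennreal (2 * \<alpha> / (\<alpha> - 1) * \<mu>)" unfolding \<mu>_def by simp
    finally have fin: "(\<Sum>n. \<integral>\<^sup>+x. ennreal (D n x) \<partial>M) < \<infinity>" using le_less_trans by fastforce
    have AEs: "AE x in M. summable (\<lambda>n. D n x)"
      by (rule AE_summable[OF D_meas _ fin]) (simp add: D_def)
    have k_lim: "filterlim k at_top sequentially"
      unfolding filterlim_at_top
    proof
      fix N
      obtain n0 where "N < k n0" using kseq_props(5)[OF a] unfolding k_def by blast
      thus "eventually (\<lambda>n. N \<le> k n) sequentially"
        using kseq_props(4)[OF a] unfolding k_def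
        by (intro eventually_sequentiallyI[of n0]) (meson le_trans less_imp_le)
    qed
    have ET: "(\<lambda>n. (\<Sum>j<k n. c j) / real (k n)) \<longlonglongrightarrow> \<mu>"
      by (rule filterlim_compose[OF cesaro_real[OF c_lim] k_lim])
    from AEs show ?thesis
    proof (rule AE_mp, intro AE_I2 impI)
      fix x assume "summable (\<lambda>n. D n x)"
      hence "(\<lambda>n. D n x) \<longlonglongrightarrow> 0" by (rule summable_LIMSEQ_zero)
      hence "(\<lambda>n. sqrt (D n x)) \<longlonglongrightarrow> sqrt 0" by (rule tendsto_real_sqrt)
      hence "(\<lambda>n. \<bar>S n x / real (k n)\<bar>) \<longlonglongrightarrow> 0" unfolding D_def by simp
      hence Sl: "(\<lambda>n. S n x / real (k n)) \<longlonglongrightarrow> 0" by (rule tendsto_rabs_zero_iff[THEN iffD1])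
      have eq: "T (k n) x / real (k n) = S n x / real (k n) + (\<Sum>j<k n. c j) / real (k n)" for n
        unfolding T_def S_def W_def by (simp add: sum_subtractf add_divide_distrib[symmetric])
      show "(\<lambda>n. T (kseq \<alpha> n) x / real (kseq \<alpha> n)) \<longlonglongrightarrow> \<mu>"
        using tendsto_add[OF Sl ET] unfolding k_def[symmetric] eq by simp
    qed
  qed

  define \<alpha> where "\<alpha> l = 1 + 1 / (real l + 1)" for l :: nat
  have a1: "1 < \<alpha> l" for l unfolding \<alpha>_def by simp
  have alim: "\<alpha> \<longlonglongrightarrow> 1"
  proof -
    have "(\<lambda>l. 1 / (real l + 1)) \<longlonglongrightarrow> 0"
      using LIMSEQ_inverse_real_of_nat by (simp add: inverse_eq_divide add.commute)
    hence "(\<lambda>l. 1 + 1 / (real l + 1)) \<longlonglongrightarrow> 1 + 0"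
      by (intro tendsto_add tendsto_const)
    thus ?thesis unfolding \<alpha>_def by simp
  qed
  have "AE x in M. \<forall>l. (\<lambda>n. T (kseq (\<alpha> l) n) x / real (kseq (\<alpha> l) n)) \<longlonglongrightarrow> \<mu>"
    using partB a1 by (simp add: AE_all_countable)
  with partA show ?thesis
  proof (eventually_elim)
    case (elim x)
    note ev = elim(1) and lims = elim(2)
    obtain N where N: "\<And>j. N \<le> j \<Longrightarrow> Y j x = Z j x" using ev unfolding eventually_sequentially by blast
    define C where "C = (\<Sum>j<N. Y j x - Z j x)"
    have diff: "(\<Sum>j<m. Y j x) - T m x = C" if "N \<le> m" for m
    proof -
      have "(\<Sum>j<m. Y j x) - T m x = (\<Sum>j<m. Y j x - Z j x)" unfolding T_def by (simp add: sum_subtractf)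
      also have "\<dots> = (\<Sum>j<N. Y j x - Z j x) + (\<Sum>j\<in>{N..<m}. Y j x - Z j x)"
        using that by (metis atLeast0LessThan sum.atLeastLessThan_concat zero_le)
      also have "(\<Sum>j\<in>{N..<m}. Y j x - Z j x) = 0" using N by (intro sum.neutral) auto
      finally show ?thesis unfolding C_def by simp
    qed
    have Clim: "(\<lambda>m. C / real m) \<longlonglongrightarrow> 0" by (rule lim_const_over_n)
    show "(\<lambda>n. (\<Sum>j<n. Y j x) / real n) \<longlonglongrightarrow> expectation (Y 0)"
      unfolding \<mu>_def[symmetric]
    proof (rule combine[where \<beta>="\<lambda>l. (\<alpha> l)^2"])
      show "(\<lambda>l. (\<alpha> l)^2) \<longlonglongrightarrow> 1" using tendsto_power[OF alim, of 2] by simp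
      show "0 < (\<alpha> l)^2" for l using a1[of l] by simp
      fix l and \<epsilon> :: real assume eps: "0 < \<epsilon>"
      have e1: "eventually (\<lambda>m. T m x / real m \<le> (\<alpha> l)^2 * \<mu> + \<epsilon>/2 \<and> \<mu> / (\<alpha> l)^2 - \<epsilon>/2 \<le> T m x / real m) sequentially"
      proof (rule interp[where k="kseq (\<alpha> l)"])
        show "\<And>i j. i \<le> j \<Longrightarrow> T i x \<le> T j x" unfolding T_def
          using Z_nn by (intro sum_mono2) auto
        show "\<And>m. 0 \<le> T m x" unfolding T_def using Z_nn by (intro sum_nonneg) auto
        show "\<And>i j. i \<le> j \<Longrightarrow> kseq (\<alpha> l) i \<le> kseq (\<alpha> l) j" by (rule kseq_props(4)[OF a1])
        show "1 \<le> kseq (\<alpha> l) 0" by (rule kseq_props(1)[OF a1])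
        show "\<And>m. \<exists>n. m < kseq (\<alpha> l) n" by (rule kseq_props(5)[OF a1])
        show "(\<lambda>n. T (kseq (\<alpha> l) n) x / real (kseq (\<alpha> l) n)) \<longlonglongrightarrow> \<mu>" using lims by blast
        show "1 \<le> (\<alpha> l)^2" using a1[of l] by (simp add: one_le_power)
        show "eventually (\<lambda>n. real (kseq (\<alpha> l) (Suc n)) \<le> (\<alpha> l)^2 * real (kseq (\<alpha> l) n)) sequentially"
          by (rule kseq_ratio[OF a1])
        show "0 < \<epsilon>/2" using eps by simp
      qed
      have e2: "eventually (\<lambda>m. \<bar>C / real m\<bar> < \<epsilon>/2) sequentially"
        using order_tendstoD(2)[OF tendsto_rabs[OF Clim], of "\<epsilon>/2"] eps by simp
      have e3: "eventually (\<lambda>m. N \<le> m \<and> 0 < m) sequentially"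
        by (intro eventually_conj eventually_ge_at_top eventually_gt_at_top)
      show "eventually (\<lambda>m. (\<Sum>j<m. Y j x) / real m \<le> (\<alpha> l)^2 * \<mu> + \<epsilon> \<and>
                \<mu> / (\<alpha> l)^2 - \<epsilon> \<le> (\<Sum>j<m. Y j x) / real m) sequentially"
        using e1 e2 e3
      proof eventually_elim
        case (elim m)
        have "(\<Sum>j<m. Y j x) / real m = T m x / real m + C / real m"
          using diff[of m] elim(3) by (simp add: field_simps)
        moreover have "C / real m \<le> \<bar>C / real m\<bar>" by (rule abs_ge_self)
        moreover have "- (C / real m) \<le> \<bar>C / real m\<bar>" by (rule abs_ge_minus_self)
        ultimately show ?case using elim(1,2) by (elim conjE) linarith
      qed
    qed
  qed
qed

end



context prob_space begin

lemma slln: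
  fixes Y :: "nat \<Rightarrow> 'a \<Rightarrow> real"
  assumes rv[measurable]: "\<And>j. Y j \<in> borel_measurable M"
    and ind: "\<And>i j. i \<noteq> j \<Longrightarrow> indep_var borel (Y i) borel (Y j)"
    and idd: "\<And>j. distr M borel (Y j) = distr M borel (Y 0)"
    and int: "integrable M (Y 0)"
  shows "AE x in M. (\<lambda>n. (\<Sum>j<n. Y j x) / real n) \<longlonglongrightarrow> expectation (Y 0)"
proof -
  have gen: "AE x in M. (\<lambda>n. (\<Sum>j<n. g (Y j x)) / real n) \<longlonglongrightarrow> expectation (\<lambda>x. g (Y 0 x))"
    if g[measurable]: "g \<in> borel_measurable borel" and gnn: "\<And>y. 0 \<le> g y"
      and gint: "integrable M (\<lambda>x. g (Y 0 x))" for g :: "real \<Rightarrow> real"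
  proof (rule slln_nonneg[where Y="\<lambda>j x. g (Y j x)"])
    show "indep_var borel (\<lambda>x. g (Y i x)) borel (\<lambda>x. g (Y j x))" if "i \<noteq> j" for i j
      using indep_var_compose[OF ind[OF that] g g] by (simp add: comp_def)
    show "distr M borel (\<lambda>x. g (Y j x)) = distr M borel (\<lambda>x. g (Y 0 x))" for j
    proof -
      have "distr M borel (\<lambda>x. g (Y j x)) = distr (distr M borel (Y j)) borel g"
        by (subst distr_distr) (auto simp: comp_def)
      also have "\<dots> = distr (distr M borel (Y 0)) borel g" by (simp add: idd[of j])
      also have "\<dots> = distr M borel (\<lambda>x. g (Y 0 x))"
        by (subst distr_distr) (auto simp: comp_def)
      finally show ?thesis .
    qed
  qed (auto simp: gnn gint)
  have P: "AE x in M. (\<lambda>n. (\<Sum>j<n. max (Y j x) 0) / real n) \<longlonglongrightarrow> expectation (\<lambda>x. max (Y 0 x) 0)"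
    by (rule gen) (auto intro: integrable_max int)
  have N: "AE x in M. (\<lambda>n. (\<Sum>j<n. max (- Y j x) 0) / real n) \<longlonglongrightarrow> expectation (\<lambda>x. max (- Y 0 x) 0)"
    by (rule gen[of "\<lambda>y. max (- y) 0", simplified]) (auto intro!: integrable_max integrable_minus int)
  have E: "expectation (Y 0) = expectation (\<lambda>x. max (Y 0 x) 0) - expectation (\<lambda>x. max (- Y 0 x) 0)"
  proof -
    have "Y 0 = (\<lambda>x. max (Y 0 x) 0 - max (- Y 0 x) 0)" by (auto simp: fun_eq_iff)
    hence "expectation (Y 0) = expectation (\<lambda>x. max (Y 0 x) 0 - max (- Y 0 x) 0)" by metis
    also have "\<dots> = expectation (\<lambda>x. max (Y 0 x) 0) - expectation (\<lambda>x. max (- Y 0 x) 0)"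
      by (rule Bochner_Integration.integral_diff) (auto intro!: integrable_max integrable_minus int)
    finally show ?thesis .
  qed
  from P N show ?thesis
  proof eventually_elim
    case (elim x)
    have eq: "(\<Sum>j<n. Y j x) / real n = (\<Sum>j<n. max (Y j x) 0) / real n - (\<Sum>j<n. max (- Y j x) 0) / real n" for n
    proof -
      have "(\<Sum>j<n. Y j x) = (\<Sum>j<n. max (Y j x) 0 - max (- Y j x) 0)" by (intro sum.cong) auto
      thus ?thesis by (simp add: sum_subtractf diff_divide_distrib)
    qed
    show ?case unfolding eq E by (intro tendsto_diff elim)
  qed
qed

end



context prob_space begin

lemma strat_distr:
  fixes X :: "'a \<Rightarrow> 'b::topological_space" and Xj :: "'a \<Rightarrow> 'b"
  assumes X[measurable]: "X \<in> borel_measurable M" and Xj[measurable]: "Xj \<in> borel_measurable M"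
    and Ai[measurable]: "Ai \<in> sets borel" and pos: "0 < pA"
    and law: "\<forall>B\<in>sets borel. measure M (Xj -` B \<inter> space M) = measure M (X -` (B \<inter> Ai) \<inter> space M) / pA"
  shows "distr M borel Xj = density (distr M borel X) (\<lambda>x. ennreal (indicator Ai x / pA))"
proof (rule measure_eqI)
  show "sets (distr M borel Xj) = sets (density (distr M borel X) (\<lambda>x. ennreal (indicator Ai x / pA)))"
    by simp
  fix B assume "B \<in> sets (distr M borel Xj)"
  hence B[measurable]: "B \<in> sets borel" by simp
  have "emeasure (distr M borel Xj) B = emeasure M (Xj -` B \<inter> space M)"
    by (rule emeasure_distr) auto
  also have "\<dots> = ennreal (measure M (X -` (B \<inter> Ai) \<inter> space M) / pA)"
    using law B by (simp add: emeasure_eq_measure)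
  also have "\<dots> = emeasure (density (distr M borel X) (\<lambda>x. ennreal (indicator Ai x / pA))) B"
  proof -
    have "emeasure (density (distr M borel X) (\<lambda>x. ennreal (indicator Ai x / pA))) B
        = (\<integral>\<^sup>+x. ennreal (indicator Ai x / pA) * indicator B x \<partial>distr M borel X)"
      by (rule emeasure_density) auto
    also have "\<dots> = (\<integral>\<^sup>+x. ennreal (1 / pA) * indicator (B \<inter> Ai) x \<partial>distr M borel X)"
      by (intro nn_integral_cong) (auto simp: indicator_def)
    also have "\<dots> = ennreal (1 / pA) * emeasure (distr M borel X) (B \<inter> Ai)"
      by (rule nn_integral_cmult_indicator) auto
    also have "emeasure (distr M borel X) (B \<inter> Ai) = emeasure M (X -` (B \<inter> Ai) \<inter> space M)"
      by (rule emeasure_distr) auto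
    also have "\<dots> = ennreal (measure M (X -` (B \<inter> Ai) \<inter> space M))" by (simp add: emeasure_eq_measure)
    also have "ennreal (1 / pA) * ennreal (measure M (X -` (B \<inter> Ai) \<inter> space M))
        = ennreal (measure M (X -` (B \<inter> Ai) \<inter> space M) / pA)"
      using pos by (simp add: ennreal_mult''[symmetric] divide_inverse mult.commute)
    finally show ?thesis by simp
  qed
  finally show "emeasure (distr M borel Xj) B = emeasure (density (distr M borel X) (\<lambda>x. ennreal (indicator Ai x / pA))) B" .
qed

lemma strat_integral:
  fixes X :: "'a \<Rightarrow> 'b::topological_space" and Xj :: "'a \<Rightarrow> 'b" and g :: "'b \<Rightarrow> real"
  assumes X[measurable]: "X \<in> borel_measurable M" and Xj[measurable]: "Xj \<in> borel_measurable M"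
    and Ai[measurable]: "Ai \<in> sets borel" and pos: "0 < pA"
    and dist: "distr M borel Xj = density (distr M borel X) (\<lambda>x. ennreal (indicator Ai x / pA))"
    and g[measurable]: "g \<in> borel_measurable borel"
    and gint: "integrable M (\<lambda>\<omega>. g (X \<omega>))"
  shows "integrable M (\<lambda>\<omega>. g (Xj \<omega>))"
    and "expectation (\<lambda>\<omega>. g (Xj \<omega>)) = expectation (\<lambda>\<omega>. indicator Ai (X \<omega>) / pA * g (X \<omega>))"
proof -
  have nn: "AE x in distr M borel X. 0 \<le> indicator Ai x / pA" using pos by auto
  have i1: "integrable (distr M borel X) (\<lambda>x. (indicator Ai x / pA) *\<^sub>R g x)"
  proof -
    have "integrable M (\<lambda>\<omega>. (indicator Ai (X \<omega>) / pA) * g (X \<omega>))"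
    proof (rule Bochner_Integration.integrable_bound)
      show "integrable M (\<lambda>\<omega>. (1 / pA) * g (X \<omega>))" using gint by (rule integrable_mult_right)
      show "AE x in M. norm (indicator Ai (X x) / pA * g (X x)) \<le> norm (1 / pA * g (X x))"
        using pos by (auto simp: indicator_def abs_mult)
    qed measurable
    thus ?thesis by (subst integrable_distr_eq) auto
  qed
  show "integrable M (\<lambda>\<omega>. g (Xj \<omega>))"
  proof -
    have "integrable (density (distr M borel X) (\<lambda>x. ennreal (indicator Ai x / pA))) g
       \<longleftrightarrow> integrable (distr M borel X) (\<lambda>x. (indicator Ai x / pA) *\<^sub>R g x)"
      by (rule integrable_density) (use nn in auto)
    thus ?thesis using i1 integrable_distr_eq[OF Xj g] dist by simp
  qed
  have "expectation (\<lambda>\<omega>. g (Xj \<omega>)) = integral\<^sup>L (distr M borel Xj) g"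
    by (rule integral_distr[symmetric]) auto
  also have "\<dots> = integral\<^sup>L (distr M borel X) (\<lambda>x. (indicator Ai x / pA) *\<^sub>R g x)"
    unfolding dist by (rule integral_density) (use nn in auto)
  also have "\<dots> = expectation (\<lambda>\<omega>. indicator Ai (X \<omega>) / pA * g (X \<omega>))"
    by (subst integral_distr) auto
  finally show "expectation (\<lambda>\<omega>. g (Xj \<omega>)) = expectation (\<lambda>\<omega>. indicator Ai (X \<omega>) / pA * g (X \<omega>))" .
qed

end



lemma sum_1N: "(\<Sum>j=1..N. h j) = (\<Sum>j<N. h (Suc j) :: real)"
  by (induction N) auto

lemma traj_ge:
  assumes "adaptive_traj rule I p Nseq y n" and i: "i \<in> {1..I}"
  shows "k \<le> n k i"
proof (induction k)
  case 0 thus ?case by simp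
next
  case (Suc k)
  from assms(1) obtain m where "n (Suc k) i = n k i + 1 + nat (sys_round m i)"
    unfolding adaptive_traj_def using i by (metis diff_Suc_1 le_add1 plus_1_eq_Suc)
  thus ?case using Suc by simp
qed

theorem proposition1p1:
  fixes M :: "'w measure"
    and X :: "'w \<Rightarrow> real ^ 'd"
    and f :: "real ^ 'd \<Rightarrow> real"
    and I :: nat
    and A :: "nat \<Rightarrow> (real ^ 'd) set"
    and p :: "nat \<Rightarrow> real"
    and Xs :: "nat \<Rightarrow> nat \<Rightarrow> 'w \<Rightarrow> real ^ 'd"
    and Nseq :: "nat \<Rightarrow> nat"
    and rule :: alloc_rule
  assumes "prob_space M"
    and "X \<in> borel_measurable M"
    and "f \<in> borel_measurable borel"
    and "\<forall>i\<in>{1..I}. A i \<in> sets borel"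
    and "disjoint_family_on A {1..I}"
    and "(\<Union>i\<in>{1..I}. A i) = UNIV"
    and "\<forall>i\<in>{1..I}. p i = measure M (X -` A i \<inter> space M) \<and> p i > 0"
    and "prob_space.indep_vars M (\<lambda>_. borel) (\<lambda>ij. Xs (fst ij) (snd ij)) ({1..I} \<times> {1..})"
    and "\<forall>i\<in>{1..I}. \<forall>j\<ge>1. \<forall>B\<in>sets borel.
           measure M (Xs i j -` B \<inter> space M) = measure M (X -` (B \<inter> A i) \<inter> space M) / p i"
    and "Nseq 0 = 0"
    and "\<forall>k. Nseq k < Nseq (Suc k) \<and> Nseq k + I \<le> Nseq (Suc k)"
  shows "(integrable M (\<lambda>\<omega>. f (X \<omega>)) \<longrightarrow>
            (AE \<omega> in M. \<forall>n. adaptive_traj rule I p Nseq (\<lambda>i j. f (Xs i j \<omega>)) n \<longrightarrow>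
               (\<lambda>k. strat_est I p (\<lambda>i j. f (Xs i j \<omega>)) n k)
                 \<longlonglongrightarrow> (\<integral>\<omega>'. f (X \<omega>') \<partial>M)))
       \<and> (integrable M (\<lambda>\<omega>. (f (X \<omega>))\<^sup>2) \<longrightarrow>
            (AE \<omega> in M. \<forall>n. adaptive_traj rule I p Nseq (\<lambda>i j. f (Xs i j \<omega>)) n \<longrightarrow>
               (\<forall>i\<in>{1..I}. (\<lambda>k. emp_sd (\<lambda>j. f (Xs i j \<omega>)) (n k i))
                  \<longlonglongrightarrow> sqrt (prob_space.variance M (\<lambda>\<omega>'. f (Xs i 1 \<omega>')))) \<and>
               (\<lambda>k. \<Sum>i=1..I. p i * emp_sd (\<lambda>j. f (Xs i j \<omega>)) (n k i))
                  \<longlonglongrightarrow> (\<Sum>i=1..I. p i * sqrt (prob_space.variance M (\<lambda>\<omega>'. f (Xs i 1 \<omega>'))))))"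
proof -
  interpret P: prob_space M by fact
  note Xm[measurable] = assms(2)
  note fm[measurable] = assms(3)
  have Am[measurable]: "A i \<in> sets borel" if "i \<in> {1..I}" for i using assms(4) that by blast
  have ppos: "0 < p i" if "i \<in> {1..I}" for i using assms(7) that by blast
  have pdef: "p i = measure M (X -` A i \<inter> space M)" if "i \<in> {1..I}" for i using assms(7) that by blast
  note indep = assms(8)
  have Xsm[measurable]: "Xs i j \<in> borel_measurable M" if "i \<in> {1..I}" "1 \<le> j" for i j
  proof -
    have "\<forall>ij\<in>{1..I} \<times> {1..}. Xs (fst ij) (snd ij) \<in> borel_measurable M"
      using indep unfolding P.indep_vars_def2 by blast
    thus ?thesis using that by force
  qed
  have pair: "P.indep_var borel (Xs i j) borel (Xs i j')"
    if i: "i \<in> {1..I}" and j: "1 \<le> j" "1 \<le> j'" "j \<noteq> j'" for i j j'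
  proof -
    have "P.indep_var (PiM {(i,j)} (\<lambda>_. borel)) (\<lambda>\<omega>. restrict (\<lambda>ij. Xs (fst ij) (snd ij) \<omega>) {(i,j)})
                      (PiM {(i,j')} (\<lambda>_. borel)) (\<lambda>\<omega>. restrict (\<lambda>ij. Xs (fst ij) (snd ij) \<omega>) {(i,j')})"
      by (rule P.indep_var_restrict[OF indep]) (use i j in auto)
    hence "P.indep_var borel ((\<lambda>x. x (i,j)) \<circ> (\<lambda>\<omega>. restrict (\<lambda>ij. Xs (fst ij) (snd ij) \<omega>) {(i,j)}))
                       borel ((\<lambda>x. x (i,j')) \<circ> (\<lambda>\<omega>. restrict (\<lambda>ij. Xs (fst ij) (snd ij) \<omega>) {(i,j')}))"
      by (rule P.indep_var_compose) (auto intro: measurable_component_singleton)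
    moreover have "((\<lambda>x. x (i,j)) \<circ> (\<lambda>\<omega>. restrict (\<lambda>ij. Xs (fst ij) (snd ij) \<omega>) {(i,j)})) = Xs i j"
      by (auto simp: fun_eq_iff)
    moreover have "((\<lambda>x. x (i,j')) \<circ> (\<lambda>\<omega>. restrict (\<lambda>ij. Xs (fst ij) (snd ij) \<omega>) {(i,j')})) = Xs i j'"
      by (auto simp: fun_eq_iff)
    ultimately show ?thesis by simp
  qed
  define \<nu> where "\<nu> i = density (distr M borel X) (\<lambda>x. ennreal (indicator (A i) x / p i))" for i
  have dist: "distr M borel (Xs i j) = \<nu> i" if i: "i \<in> {1..I}" and j: "1 \<le> j" for i j
    unfolding \<nu>_def
    by (rule P.strat_distr) (use i j assms(9) ppos in auto)
  have sint: "integrable M (\<lambda>\<omega>. g (Xs i j \<omega>))"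
    and sexp: "P.expectation (\<lambda>\<omega>. g (Xs i j \<omega>)) = P.expectation (\<lambda>\<omega>. indicator (A i) (X \<omega>) / p i * g (X \<omega>))"
    if i: "i \<in> {1..I}" and j: "1 \<le> j" and g: "g \<in> borel_measurable borel"
      and gi: "integrable M (\<lambda>\<omega>. g (X \<omega>))" for i j g
    using P.strat_integral[OF Xm Xsm[OF i j] Am[OF i] ppos[OF i] dist[OF i j, unfolded \<nu>_def] g gi] by auto
  have slln_i: "AE \<omega> in M. (\<lambda>N. (\<Sum>j<N. g (Xs i (Suc j) \<omega>)) / real N) \<longlonglongrightarrow> P.expectation (\<lambda>\<omega>. g (Xs i 1 \<omega>))"
    if i: "i \<in> {1..I}" and g[measurable]: "g \<in> borel_measurable borel"
      and gi: "integrable M (\<lambda>\<omega>. g (X \<omega>))" for i g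
  proof -
    have Xsm'[measurable]: "Xs i (Suc j) \<in> borel_measurable M" for j using Xsm[OF i] by simp
    have "AE \<omega> in M. (\<lambda>N. (\<Sum>j<N. g (Xs i (Suc j) \<omega>)) / real N) \<longlonglongrightarrow> P.expectation (\<lambda>\<omega>. g (Xs i (Suc 0) \<omega>))"
    proof (rule P.slln)
      show "(\<lambda>\<omega>. g (Xs i (Suc j) \<omega>)) \<in> borel_measurable M" for j by measurable
      show "P.indep_var borel (\<lambda>\<omega>. g (Xs i (Suc j) \<omega>)) borel (\<lambda>\<omega>. g (Xs i (Suc j') \<omega>))"
        if "j \<noteq> j'" for j j'
        using P.indep_var_compose[OF pair[OF i _ _, of "Suc j" "Suc j'"] g g] that by (simp add: comp_def)
      show "distr M borel (\<lambda>\<omega>. g (Xs i (Suc j) \<omega>)) = distr M borel (\<lambda>\<omega>. g (Xs i (Suc 0) \<omega>))" for j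
      proof -
        have "distr M borel (\<lambda>\<omega>. g (Xs i (Suc j) \<omega>)) = distr (distr M borel (Xs i (Suc j))) borel g"
          by (subst distr_distr) (auto simp: comp_def)
        also have "\<dots> = distr (distr M borel (Xs i (Suc 0))) borel g"
          using dist[OF i, of "Suc j"] dist[OF i, of "Suc 0"] by simp
        also have "\<dots> = distr M borel (\<lambda>\<omega>. g (Xs i (Suc 0) \<omega>))"
          by (subst distr_distr) (auto simp: comp_def)
        finally show ?thesis .
      qed
      show "integrable M (\<lambda>\<omega>. g (Xs i (Suc 0) \<omega>))" using sint[OF i _ g gi] by simp
    qed
    thus ?thesis by simp
  qed
  have ind_sum: "(\<Sum>i=1..I. indicator (A i) x) = (1::real)" for x
  proof -
    obtain i0 where i0: "i0 \<in> {1..I}" "x \<in> A i0" using assms(6) by blast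
    have "(\<Sum>i=1..I. indicator (A i) x) = (\<Sum>i=1..I. (if i = i0 then 1 else 0::real))"
    proof (intro sum.cong refl)
      fix i assume i: "i \<in> {1..I}"
      show "indicator (A i) x = (if i = i0 then 1 else 0::real)"
      proof (cases "i = i0")
        case True thus ?thesis using i0 by simp
      next
        case False
        hence "A i \<inter> A i0 = {}" using assms(5) i i0(1) unfolding disjoint_family_on_def by blast
        hence "x \<notin> A i" using i0 by blast
        thus ?thesis using False by simp
      qed
    qed
    also have "\<dots> = 1" using i0(1) by simp
    finally show ?thesis .
  qed
  have total: "(\<Sum>i=1..I. p i * P.expectation (\<lambda>\<omega>. f (Xs i 1 \<omega>))) = P.expectation (\<lambda>\<omega>. f (X \<omega>))"
    if fi: "integrable M (\<lambda>\<omega>. f (X \<omega>))"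
  proof -
    have "(\<Sum>i=1..I. p i * P.expectation (\<lambda>\<omega>. f (Xs i 1 \<omega>)))
        = (\<Sum>i=1..I. P.expectation (\<lambda>\<omega>. indicator (A i) (X \<omega>) * f (X \<omega>)))"
    proof (intro sum.cong refl)
      fix i assume i: "i \<in> {1..I}"
      have "p i * P.expectation (\<lambda>\<omega>. f (Xs i 1 \<omega>)) = p i * P.expectation (\<lambda>\<omega>. (1 / p i) * (indicator (A i) (X \<omega>) * f (X \<omega>)))"
        using sexp[OF i _ fm fi, of 1] by simp
      also have "\<dots> = P.expectation (\<lambda>\<omega>. indicator (A i) (X \<omega>) * f (X \<omega>))"
        using ppos[OF i] by simp
      finally show "p i * P.expectation (\<lambda>\<omega>. f (Xs i 1 \<omega>)) = P.expectation (\<lambda>\<omega>. indicator (A i) (X \<omega>) * f (X \<omega>))" .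
    qed
    also have "\<dots> = P.expectation (\<lambda>\<omega>. \<Sum>i=1..I. indicator (A i) (X \<omega>) * f (X \<omega>))"
    proof (rule Bochner_Integration.integral_sum[symmetric])
      fix i assume i: "i \<in> {1..I}"
      show "integrable M (\<lambda>\<omega>. indicator (A i) (X \<omega>) * f (X \<omega>))"
      proof (rule Bochner_Integration.integrable_bound[OF fi])
        show "AE x in M. norm (indicator (A i) (X x) * f (X x)) \<le> norm (f (X x))"
          by (auto simp: indicator_def)
      qed (use i in measurable)
    qed
    also have "\<dots> = P.expectation (\<lambda>\<omega>. f (X \<omega>))"
    proof -
      have "(\<Sum>i=1..I. indicator (A i) (X \<omega>) * f (X \<omega>)) = f (X \<omega>)" for \<omega>
      proof -
        have "(\<Sum>i=1..I. indicator (A i) (X \<omega>) * f (X \<omega>)) = (\<Sum>i=1..I. indicator (A i) (X \<omega>)) * f (X \<omega>)"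
          by (rule sum_distrib_right[symmetric])
        also have "\<dots> = f (X \<omega>)" unfolding ind_sum by simp
        finally show ?thesis .
      qed
      hence "(\<lambda>\<omega>. \<Sum>i=1..I. indicator (A i) (X \<omega>) * f (X \<omega>)) = (\<lambda>\<omega>. f (X \<omega>))"
        by (intro ext)
      thus ?thesis by (rule arg_cong)
    qed
    finally show ?thesis .
  qed
  show ?thesis
  proof (intro conjI impI)
    assume fi: "integrable M (\<lambda>\<omega>. f (X \<omega>))"
    have "AE \<omega> in M. \<forall>i\<in>{1..I}. (\<lambda>N. (\<Sum>j<N. f (Xs i (Suc j) \<omega>)) / real N) \<longlonglongrightarrow> P.expectation (\<lambda>\<omega>. f (Xs i 1 \<omega>))"
      using slln_i[OF _ fm fi] by (subst AE_finite_all) auto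
    thus "AE \<omega> in M. \<forall>n. adaptive_traj rule I p Nseq (\<lambda>i j. f (Xs i j \<omega>)) n \<longrightarrow>
               (\<lambda>k. strat_est I p (\<lambda>i j. f (Xs i j \<omega>)) n k) \<longlonglongrightarrow> (\<integral>\<omega>'. f (X \<omega>') \<partial>M)"
    proof (rule AE_mp, intro AE_I2 impI allI)
      fix \<omega> n
      assume lim: "\<forall>i\<in>{1..I}. (\<lambda>N. (\<Sum>j<N. f (Xs i (Suc j) \<omega>)) / real N) \<longlonglongrightarrow> P.expectation (\<lambda>\<omega>. f (Xs i 1 \<omega>))"
        and tr: "adaptive_traj rule I p Nseq (\<lambda>i j. f (Xs i j \<omega>)) n"
      have nlim: "filterlim (\<lambda>k. n k i) at_top sequentially" if "i \<in> {1..I}" for i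
        using traj_ge[OF tr that] by (intro filterlim_at_top_mono[OF filterlim_ident]) auto
      have eq: "strat_est I p (\<lambda>i j. f (Xs i j \<omega>)) n k = (\<Sum>i=1..I. p i * ((\<Sum>j<n k i. f (Xs i (Suc j) \<omega>)) / real (n k i)))" for k
        unfolding strat_est_def sum_1N by (intro sum.cong refl) simp
      show "(\<lambda>k. strat_est I p (\<lambda>i j. f (Xs i j \<omega>)) n k) \<longlonglongrightarrow> (\<integral>\<omega>'. f (X \<omega>') \<partial>M)"
        unfolding eq total[OF fi, symmetric]
      proof (intro tendsto_sum tendsto_mult tendsto_const)
        fix i assume i: "i \<in> {1..I}"
        show "(\<lambda>k. (\<Sum>j<n k i. f (Xs i (Suc j) \<omega>)) / real (n k i)) \<longlonglongrightarrow> P.expectation (\<lambda>\<omega>. f (Xs i 1 \<omega>))"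
          using filterlim_compose[OF lim[rule_format, OF i] nlim[OF i]] by simp
      qed
    qed
  next
    assume f2i: "integrable M (\<lambda>\<omega>. (f (X \<omega>))\<^sup>2)"
    have fi: "integrable M (\<lambda>\<omega>. f (X \<omega>))"
      by (rule P.square_integrable_imp_integrable) (use f2i in auto)
    have f2m: "(\<lambda>x. (f x)^2) \<in> borel_measurable borel" by measurable
    have var: "sqrt (P.variance (\<lambda>\<omega>'. f (Xs i 1 \<omega>'))) =
        sqrt (P.expectation (\<lambda>\<omega>. (f (Xs i 1 \<omega>))^2) - (P.expectation (\<lambda>\<omega>. f (Xs i 1 \<omega>)))^2)"
      if i: "i \<in> {1..I}" for i
      using P.variance_eq[OF sint[OF i _ fm fi, of 1] sint[OF i _ f2m f2i, of 1]] by simp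
    have "AE \<omega> in M. \<forall>i\<in>{1..I}. (\<lambda>N. (\<Sum>j<N. f (Xs i (Suc j) \<omega>)) / real N) \<longlonglongrightarrow> P.expectation (\<lambda>\<omega>. f (Xs i 1 \<omega>))"
      using slln_i[OF _ fm fi] by (subst AE_finite_all) auto
    moreover have "AE \<omega> in M. \<forall>i\<in>{1..I}. (\<lambda>N. (\<Sum>j<N. (f (Xs i (Suc j) \<omega>))^2) / real N) \<longlonglongrightarrow> P.expectation (\<lambda>\<omega>. (f (Xs i 1 \<omega>))^2)"
      using slln_i[OF _ f2m f2i] by (subst AE_finite_all) auto
    ultimately show "AE \<omega> in M. \<forall>n. adaptive_traj rule I p Nseq (\<lambda>i j. f (Xs i j \<omega>)) n \<longrightarrow>
               (\<forall>i\<in>{1..I}. (\<lambda>k. emp_sd (\<lambda>j. f (Xs i j \<omega>)) (n k i))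
                  \<longlonglongrightarrow> sqrt (prob_space.variance M (\<lambda>\<omega>'. f (Xs i 1 \<omega>')))) \<and>
               (\<lambda>k. \<Sum>i=1..I. p i * emp_sd (\<lambda>j. f (Xs i j \<omega>)) (n k i))
                  \<longlonglongrightarrow> (\<Sum>i=1..I. p i * sqrt (prob_space.variance M (\<lambda>\<omega>'. f (Xs i 1 \<omega>'))))"
    proof (eventually_elim, intro allI impI)
      case (elim \<omega>)
      note lim1 = elim(1) and lim2 = elim(2)
      fix n assume tr: "adaptive_traj rule I p Nseq (\<lambda>i j. f (Xs i j \<omega>)) n"
      have nlim: "filterlim (\<lambda>k. n k i) at_top sequentially" if "i \<in> {1..I}" for i
        using traj_ge[OF tr that] by (intro filterlim_at_top_mono[OF filterlim_ident]) auto
      have each: "(\<lambda>k. emp_sd (\<lambda>j. f (Xs i j \<omega>)) (n k i)) \<longlonglongrightarrow> sqrt (P.variance (\<lambda>\<omega>'. f (Xs i 1 \<omega>')))"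
        if i: "i \<in> {1..I}" for i
      proof -
        have a1: "(\<lambda>k. (\<Sum>j<n k i. f (Xs i (Suc j) \<omega>)) / real (n k i)) \<longlonglongrightarrow> P.expectation (\<lambda>\<omega>. f (Xs i 1 \<omega>))"
          using filterlim_compose[OF lim1[rule_format, OF i] nlim[OF i]] by simp
        have a2: "(\<lambda>k. (\<Sum>j<n k i. (f (Xs i (Suc j) \<omega>))^2) / real (n k i)) \<longlonglongrightarrow> P.expectation (\<lambda>\<omega>. (f (Xs i 1 \<omega>))^2)"
          using filterlim_compose[OF lim2[rule_format, OF i] nlim[OF i]] by simp
        have "(\<lambda>k. sqrt ((\<Sum>j<n k i. (f (Xs i (Suc j) \<omega>))^2) / real (n k i) - ((\<Sum>j<n k i. f (Xs i (Suc j) \<omega>)) / real (n k i))^2))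
              \<longlonglongrightarrow> sqrt (P.expectation (\<lambda>\<omega>. (f (Xs i 1 \<omega>))^2) - (P.expectation (\<lambda>\<omega>. f (Xs i 1 \<omega>)))^2)"
          by (intro tendsto_real_sqrt tendsto_diff tendsto_power a1 a2)
        thus ?thesis unfolding var[OF i] emp_sd_def sum_1N .
      qed
      show "(\<forall>i\<in>{1..I}. (\<lambda>k. emp_sd (\<lambda>j. f (Xs i j \<omega>)) (n k i))
                  \<longlonglongrightarrow> sqrt (prob_space.variance M (\<lambda>\<omega>'. f (Xs i 1 \<omega>')))) \<and>
               (\<lambda>k. \<Sum>i=1..I. p i * emp_sd (\<lambda>j. f (Xs i j \<omega>)) (n k i))
                  \<longlonglongrightarrow> (\<Sum>i=1..I. p i * sqrt (prob_space.variance M (\<lambda>\<omega>'. f (Xs i 1 \<omega>'))))"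
        using each by (auto intro!: tendsto_sum tendsto_mult tendsto_const)
    qed
  qed
qed



end
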